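(* Let $\mu_0$ be the ideal expectation of a bounded observable; single shots at noise $\epsilon\ge0$ have mean $\mu(\epsilon)$ and variance $v(\epsilon)$. Fix a Richardson rule of order $k\ge1$: scale factors $1=\lambda_0<\cdots<\lambda_k$, coefficients $c_j$ with $\sum_jc_j=1$, $\sum_jc_j\lambda_j^m=0$ ($m=1,\ldots,k$), allocation fractions $\pi_j>0$, $\sum_j\pi_j=1$. With total budget $B$, the unmitigated estimator uses $B$ shots at noise $\epsilon$; the ZNE estimator is $\sum_jc_j\widehat\mu(\lambda_j\epsilon)$ with $\widehat\mu(\lambda_j\epsilon)$ the mean of $\pi_jB$ shots at noise $\lambda_j\epsilon$, samples at distinct scales independent. Assume: (A1$(k)$) uniformly over $j$, $\mu(\lambda_j\epsilon)=\mu_0+\sum_{m=1}^ka_m\lambda_j^m\epsilon^m+O(\epsilon^{k+1})$ with $a_1=\alpha\ne0$; (A4) uniformly over the scaled noise levels, $v(\epsilon)=\nu\epsilon^q+O(\epsilon^{q+\delta_v})$ with $\nu>0$, $\delta_v>0$; (A5) the MSE difference $\Delta_{\mathrm{MSE}}(\epsilon,B)=\mathrm{MSE}_{\mathrm{noisy}}-\mathrm{MSE}_{\mathrm{ZNE}}$ satisfies \[ \Delta_{\mathrm{MSE}}(\epsilon,B)=\alpha^2\epsilon^2-\frac{K_{q,k}\epsilon^q}{B}+R(\epsilon,B),\qquad R=O(\epsilon^{2+\delta_b})+O(\epsilon^{q+\delta_v}/B), \] for some $\delta_b>0$, with differentiable power-law remainder whose rescaled version $B^{2/(2-q)}R(xB^{-1/(2-q)},B)$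 and its $x$-derivative tend to $0$ uniformly on compact subsets of $(0,\infty)$ when $q<2$, where $K_{q,k}=\nu[\sum_j c_j^2\lambda_j^q/\pi_j-1]$. Then $K_{q,k}>0$, and: if $0\le q<2$, the lower local perturbative crossing of $\Delta_{\mathrm{MSE}}(\cdot,B)$ satisfies \[ \epsilon^*(B)\sim C_{q,k}B^{-1/(2-q)},\qquad C_{q,k}=\left(\frac{K_{q,k}}{\alpha^2}\right)^{1/(2-q)}; \] if $q=2$, the local sign of $\Delta_{\mathrm{MSE}}$ for small $\epsilon>0$ is governed by the budget threshold $B^*=K_{2,k}/\alpha^2$ (ZNE helps for all small $\epsilon$ if $B>B^*$, harms if $B<B^*$); if $q>2$, the leading variance penalty is too small near zero to create a shrinking lower boundary (for each large fixed $B$, $\Delta_{\mathrm{MSE}}>0$ for all sufficiently small $\epsilon>0$, absent sign changes from higher-order terms).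
   Context: $\mathrm{MSE}(\widehat\mu)=\mathbb E[(\widehat\mu-\mu_0)^2]$. The lower local perturbative crossing is the first positive zero of $\Delta_{\mathrm{MSE}}(\cdot,B)$, in a window of the form $\{xB^{-1/(2-q)}:x\in[m,M]\}$ with $0<m<C_{q,k}<M$, across which $\Delta_{\mathrm{MSE}}$ changes from negative (ZNE harms) to positive (ZNE helps); $\epsilon^*(B)\sim g(B)$ means the ratio tends to $1$ as $B\to\infty$. *)

theory Defs
  imports "HOL-Analysis.Analysis"
begin

text \<open>Scales lam j, coefficients cf j, allocation fractions pr j,
  for j = 0..k.  mu = single-shot mean, v = single-shot variance as functions of noise,
  mu0 = ideal expectation, B = total shot budget (real).\<close>

definition mse_noisy :: "(real \<Rightarrow> real) \<Rightarrow> real \<Rightarrow> (real \<Rightarrow> real) \<Rightarrow> real \<Rightarrow> real \<Rightarrow> real" where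
  "mse_noisy mu mu0 v eps B = (mu eps - mu0)^2 + v eps / B"

text \<open>MSE of the ZNE estimator sum_j cf_j * muhat(lam_j eps), where muhat(lam_j eps) is the
  mean of pr_j * B independent shots at noise lam_j eps, scales mutually independent.\<close>
definition mse_zne :: "(real \<Rightarrow> real) \<Rightarrow> real \<Rightarrow> (real \<Rightarrow> real) \<Rightarrow> nat \<Rightarrow> (nat \<Rightarrow> real)
    \<Rightarrow> (nat \<Rightarrow> real) \<Rightarrow> (nat \<Rightarrow> real) \<Rightarrow> real \<Rightarrow> real \<Rightarrow> real" where
  "mse_zne mu mu0 v k cf lam pr eps B =
     ((\<Sum>j\<le>k. cf j * mu (lam j * eps)) - mu0)^2
     + (\<Sum>j\<le>k. (cf j)^2 * v (lam j * eps) / (pr j * B))"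

definition delta_mse :: "(real \<Rightarrow> real) \<Rightarrow> real \<Rightarrow> (real \<Rightarrow> real) \<Rightarrow> nat \<Rightarrow> (nat \<Rightarrow> real)
    \<Rightarrow> (nat \<Rightarrow> real) \<Rightarrow> (nat \<Rightarrow> real) \<Rightarrow> real \<Rightarrow> real \<Rightarrow> real" where
  "delta_mse mu mu0 v k cf lam pr eps B =
     mse_noisy mu mu0 v eps B - mse_zne mu mu0 v k cf lam pr eps B"

definition K_qk :: "real \<Rightarrow> real \<Rightarrow> nat \<Rightarrow> (nat \<Rightarrow> real) \<Rightarrow> (nat \<Rightarrow> real) \<Rightarrow> (nat \<Rightarrow> real) \<Rightarrow> real" where
  "K_qk nu q k cf lam pr = nu * ((\<Sum>j\<le>k. (cf j)^2 * lam j powr q / pr j) - 1)"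

definition zne_R :: "(real \<Rightarrow> real) \<Rightarrow> real \<Rightarrow> (real \<Rightarrow> real) \<Rightarrow> nat \<Rightarrow> (nat \<Rightarrow> real)
    \<Rightarrow> (nat \<Rightarrow> real) \<Rightarrow> (nat \<Rightarrow> real) \<Rightarrow> real \<Rightarrow> real \<Rightarrow> real \<Rightarrow> real \<Rightarrow> real \<Rightarrow> real" where
  "zne_R mu mu0 v k cf lam pr alpha nu q eps B =
     delta_mse mu mu0 v k cf lam pr eps B
     - (alpha^2 * eps^2 - K_qk nu q k cf lam pr * eps powr q / B)"

definition lower_crossing :: "(real \<Rightarrow> real \<Rightarrow> real) \<Rightarrow> real \<Rightarrow> real \<Rightarrow> real \<Rightarrow> real \<Rightarrow> real" where
  "lower_crossing D q m M B =
     Inf {eps. m * B powr (-1/(2-q)) \<le> eps \<and> eps \<le> M * B powr (-1/(2-q)) \<and> D eps B = 0}"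

end

theory Submission
  imports Defs
begin

lemma core_zero:
  fixes H H' :: "real \<Rightarrow> real"
  assumes o: "m < a0" "a0 \<le> a" "a < b" "b \<le> b0" "b0 < M"
    and der: "\<forall>y. a0 \<le> y \<and> y \<le> b0 \<longrightarrow> (H has_real_derivative H' y) (at y) \<and> H' y > 0"
    and neg: "\<forall>y. m \<le> y \<and> y \<le> a \<longrightarrow> H y < 0"
    and pos: "\<forall>y. b \<le> y \<and> y \<le> M \<longrightarrow> H y > 0"
  shows "\<exists>x. a < x \<and> x < b \<and> {y. m \<le> y \<and> y \<le> M \<and> H y = 0} = {x}
           \<and> (\<forall>y. a0 < y \<and> y < x \<longrightarrow> H y < 0) \<and> (\<forall>y. x < y \<and> y < b0 \<longrightarrow> H y > 0)"
proof -
  have mono: "H u < H w" if u: "a0 \<le> u" "u < w" "w \<le> b0" for u w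
  proof (rule DERIV_pos_imp_increasing[OF u(2)])
    fix x assume "u \<le> x" "x \<le> w"
    hence "a0 \<le> x \<and> x \<le> b0" using u by linarith
    hence "(H has_real_derivative H' x) (at x) \<and> H' x > 0" using der by blast
    thus "\<exists>y. (H has_real_derivative y) (at x) \<and> 0 < y" by blast
  qed
  have cont: "\<forall>x. a \<le> x \<and> x \<le> b \<longrightarrow> isCont H x"
  proof (intro allI impI)
    fix x assume "a \<le> x \<and> x \<le> b"
    hence "a0 \<le> x \<and> x \<le> b0" using o by linarith
    hence "(H has_real_derivative H' x) (at x)" using der by blast
    thus "isCont H x" by (rule DERIV_isCont)
  qed
  have "m \<le> a \<and> a \<le> a" using o by linarith
  hence Ha: "H a < 0" using neg by blast
  have "b \<le> b \<and> b \<le> M" using o by linarith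
  hence Hb: "H b > 0" using pos by blast
  have "\<exists>x\<ge>a. x \<le> b \<and> H x = 0"
    by (rule IVT[of H a 0 b]) (use Ha Hb o cont in auto)
  then obtain x where x: "a \<le> x" "x \<le> b" "H x = 0" by blast
  have ax: "a < x" using x Ha by (cases "a = x") auto
  have xb: "x < b" using x Hb by (cases "b = x") auto
  have uniq: "y = x" if y: "m \<le> y" "y \<le> M" "H y = 0" for y
  proof -
    have "a < y"
    proof (rule ccontr)
      assume "\<not> a < y" hence "m \<le> y \<and> y \<le> a" using y by linarith
      hence "H y < 0" using neg by blast
      thus False using y by simp
    qed
    moreover have "y < b"
    proof (rule ccontr)
      assume "\<not> y < b" hence "b \<le> y \<and> y \<le> M" using y by linarith
      hence "H y > 0" using pos by blast
      thus False using y by simp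
    qed
    ultimately have y0: "a0 \<le> y" "y \<le> b0" using o by linarith+
    have x0: "a0 \<le> x" "x \<le> b0" using o ax xb by linarith+
    show ?thesis
    proof (cases y x rule: linorder_cases)
      case less thus ?thesis using mono[OF y0(1) less x0(2)] x y by simp
    next
      case greater thus ?thesis using mono[OF x0(1) greater y0(2)] x y by simp
    qed simp
  qed
  have S: "{y. m \<le> y \<and> y \<le> M \<and> H y = 0} = {x}"
  proof (intro set_eqI iffI)
    fix y assume "y \<in> {y. m \<le> y \<and> y \<le> M \<and> H y = 0}"
    thus "y \<in> {x}" using uniq by blast
  next
    fix y assume "y \<in> {x}"
    moreover have "m \<le> x" "x \<le> M" using o x by linarith+
    ultimately show "y \<in> {y. m \<le> y \<and> y \<le> M \<and> H y = 0}" using x by simp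
  qed
  have L: "\<forall>y. a0 < y \<and> y < x \<longrightarrow> H y < 0"
  proof (intro allI impI)
    fix y assume y: "a0 < y \<and> y < x"
    have "x \<le> b0" using xb o by linarith
    hence "H y < H x" using y by (intro mono) auto
    thus "H y < 0" using x by simp
  qed
  have R: "\<forall>y. x < y \<and> y < b0 \<longrightarrow> H y > 0"
  proof (intro allI impI)
    fix y assume y: "x < y \<and> y < b0"
    have "a0 \<le> x" using ax o by linarith
    hence "H x < H y" using y by (intro mono) auto
    thus "H y > 0" using x by simp
  qed
  show ?thesis using ax xb S L R by blast
qed

lemma C_pow:
  fixes q A K :: real assumes "0 \<le> q" "q < 2" "A > 0" "K > 0"
  shows "((K/A) powr (1/(2-q))) powr (2-q) = K/A"
  using assms by (simp add: powr_powr)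

lemma f_split:
  fixes y q A K :: real assumes "y > 0"
  shows "A*y^2 - K*y powr q = y powr q * (A * y powr (2-q) - K)"
proof -
  have "y^2 = y powr q * y powr (2-q)" using assms
    by (simp add: powr_add[symmetric] powr_numeral)
  thus ?thesis by (simp add: algebra_simps)
qed

lemma f_neg:
  fixes q A K m y c1 c2 :: real assumes q: "0 \<le> q" "q < 2" and A: "A > 0" and K: "K > 0"
    and y: "0 < m" "m \<le> y" "y \<le> c1" and c1: "c1 < (K/A) powr (1/(2-q))"
  shows "A*y^2 - K*y powr q \<le> m powr q * (A * c1 powr (2-q) - K)"
    and "m powr q * (A * c1 powr (2-q) - K) < 0"
proof -
  have "c1 powr (2-q) < ((K/A) powr (1/(2-q))) powr (2-q)"
    using y c1 q by (intro powr_less_mono2) auto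
  hence lt: "c1 powr (2-q) < K/A" using C_pow[OF q A K] by simp
  hence X0: "A * c1 powr (2-q) - K < 0" using A by (simp add: field_simps)
  have "y powr (2-q) \<le> c1 powr (2-q)" using y q by (intro powr_mono2) auto
  hence X: "A * y powr (2-q) - K \<le> A * c1 powr (2-q) - K" using A by simp
  have mq: "m powr q \<le> y powr q" using y q by (intro powr_mono2) auto
  have "A*y^2 - K*y powr q = y powr q * (A * y powr (2-q) - K)" using y by (intro f_split) auto
  also have "\<dots> \<le> y powr q * (A * c1 powr (2-q) - K)"
    using X by (intro mult_left_mono) auto
  also have "\<dots> \<le> m powr q * (A * c1 powr (2-q) - K)"
    using mq X0 by (intro mult_right_mono_neg) auto
  finally show "A*y^2 - K*y powr q \<le> m powr q * (A * c1 powr (2-q) - K)" .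
  show "m powr q * (A * c1 powr (2-q) - K) < 0" using X0 y by (simp add: mult_pos_neg)
qed

lemma f_pos:
  fixes q A K m y c1 c2 :: real assumes q: "0 \<le> q" "q < 2" and A: "A > 0" and K: "K > 0"
    and y: "0 < m" "m \<le> y" "c2 \<le> y" and c2: "(K/A) powr (1/(2-q)) < c2"
  shows "A*y^2 - K*y powr q \<ge> m powr q * (A * c2 powr (2-q) - K)"
    and "m powr q * (A * c2 powr (2-q) - K) > 0"
proof -
  have "((K/A) powr (1/(2-q))) powr (2-q) < c2 powr (2-q)"
    using y c2 q by (intro powr_less_mono2) auto
  hence lt: "K/A < c2 powr (2-q)" using C_pow[OF q A K] by simp
  hence X0: "A * c2 powr (2-q) - K > 0" using A by (simp add: field_simps)
  have c2pos: "c2 > 0" using c2 by (smt (verit) powr_ge_zero)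
  have "c2 powr (2-q) \<le> y powr (2-q)" using y q c2pos by (intro powr_mono2) auto
  hence X: "A * y powr (2-q) - K \<ge> A * c2 powr (2-q) - K" using A by simp
  have mq: "m powr q \<le> y powr q" using y q by (intro powr_mono2) auto
  have "m powr q * (A * c2 powr (2-q) - K) \<le> y powr q * (A * c2 powr (2-q) - K)"
    using mq X0 by (intro mult_right_mono) auto
  also have "\<dots> \<le> y powr q * (A * y powr (2-q) - K)"
    using X by (intro mult_left_mono) auto
  also have "\<dots> = A*y^2 - K*y powr q" using y by (intro f_split[symmetric]) auto
  finally show "A*y^2 - K*y powr q \<ge> m powr q * (A * c2 powr (2-q) - K)" .
  show "m powr q * (A * c2 powr (2-q) - K) > 0" using X0 y by simp
qed

lemma fp_C_pos:
  fixes q A K C :: real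
  assumes q: "0 \<le> q" "q < 2" and A: "A > 0" and K: "K > 0" and C: "C = (K/A) powr (1/(2-q))"
  shows "2*A*C - K*(q * C powr (q-1)) > 0"
proof -
  have Cpos: "C > 0" using C A K by simp
  have C2: "C powr (2-q) = K/A" using C C_pow[OF q A K] by simp
  have e1: "C powr (q-1) * C = C powr q" using Cpos powr_add[of C "q-1" 1] by simp
  have e2: "C * C = C powr q * C powr (2-q)" using Cpos by (simp add: powr_add[symmetric] power2_eq_square)
  have "(2*A*C - K*(q * C powr (q-1))) * C = 2*A*(C*C) - K*q*(C powr (q-1) * C)"
    by (simp add: algebra_simps)
  also have "\<dots> = 2*A*(C powr q * (K/A)) - K*q*C powr q" using e1 e2 C2 by simp
  also have "\<dots> = K * C powr q * (2 - q)" using A by (simp add: field_simps)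
  also have "\<dots> > 0" using K Cpos q by simp
  finally show ?thesis using Cpos by (simp add: zero_less_mult_iff)
qed

lemma isCont_fp:
  fixes q A K C :: real assumes "C > 0"
  shows "isCont (\<lambda>y. 2*A*y - K*(q * y powr (q-1))) C"
proof -
  have "isCont (\<lambda>y. y powr (q-1)) C"
    using has_real_derivative_powr[OF assms] DERIV_isCont by blast
  thus ?thesis by (intro continuous_intros) (use assms in auto)
qed

lemma near_pos:
  fixes g :: "real \<Rightarrow> real"
  assumes "isCont g C" "g C > c"
  shows "\<exists>d>0. \<forall>y. \<bar>y - C\<bar> < d \<longrightarrow> g y > c"
proof -
  have "(g \<longlongrightarrow> g C) (at C)" using assms(1) isCont_def by blast
  hence "\<forall>\<^sub>F y in at C. c < g y" using assms(2) order_tendstoD(1) by blast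
  then obtain d where d: "d > 0" "\<forall>y. y \<noteq> C \<and> dist y C < d \<longrightarrow> c < g y"
    unfolding eventually_at by auto
  show ?thesis
  proof (intro exI[of _ d] conjI allI impI)
    fix y assume "\<bar>y - C\<bar> < d"
    thus "g y > c" using d assms(2) by (cases "y = C") (auto simp: dist_real_def)
  qed (use d in auto)
qed

lemma unif_ev:
  fixes F :: "real \<Rightarrow> real \<Rightarrow> real"
  assumes "uniform_limit T F (\<lambda>x. 0) at_top" "e > 0"
  shows "\<forall>\<^sub>F B in at_top. \<forall>y\<in>T. \<bar>F B y\<bar> < e"
  using assms unfolding uniform_limit_iff by (auto simp: dist_real_def)

lemma qlt2_main:
  fixes D S dS :: "real \<Rightarrow> real \<Rightarrow> real" and q A K C m M :: real
  assumes q: "0 \<le> q" "q < 2" and A: "A > 0" and K: "K > 0" and C: "C = (K/A) powr (1/(2-q))"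
   and ident: "\<And>B y. B > 0 \<Longrightarrow> y > 0 \<Longrightarrow>
        B powr (2/(2-q)) * D (y * B powr (-1/(2-q))) B = A*y^2 - K*y powr q + S B y"
   and der: "\<And>B y. B > 0 \<Longrightarrow> y > 0 \<Longrightarrow> (S B has_real_derivative dS B y) (at y)"
   and uS: "\<And>T. compact T \<Longrightarrow> T \<subseteq> {0<..} \<Longrightarrow> uniform_limit T S (\<lambda>x. 0) at_top"
   and udS: "\<And>T. compact T \<Longrightarrow> T \<subseteq> {0<..} \<Longrightarrow> uniform_limit T dS (\<lambda>x. 0) at_top"
   and mM: "0 < m" "m < C" "C < M"
  shows "(\<forall>\<^sub>F B in at_top.
             (\<exists>eps. m * B powr (-1/(2-q)) \<le> eps \<and> eps \<le> M * B powr (-1/(2-q)) \<and> D eps B = 0)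
             \<and> D (lower_crossing D q m M B) B = 0
             \<and> (\<forall>\<^sub>F eps in at_left (lower_crossing D q m M B). D eps B < 0)
             \<and> (\<forall>\<^sub>F eps in at_right (lower_crossing D q m M B). D eps B > 0))
          \<and> ((\<lambda>B. lower_crossing D q m M B / (C * B powr (-1/(2-q)))) \<longlongrightarrow> 1) at_top"
proof -
  define H where "H B y = A*y^2 - K*y powr q + S B y" for B y
  define fp where "fp y = 2*A*y - K*(q * y powr (q-1))" for y
  define H' where "H' B y = fp y + dS B y" for B y
  have Cpos: "C > 0" using C A K by simp
  have derH: "(H B has_real_derivative H' B y) (at y)" if "B > 0" "y > 0" for B y
  proof -
    have sq: "((\<lambda>y. y^2) has_real_derivative 2*y) (at y)"
      by (auto intro!: derivative_eq_intros)
    have "((\<lambda>y. A*y^2 - K*y powr q + S B y) has_real_derivative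
            (A*(2*y) - K*(q * y powr (q-1)) + dS B y)) (at y)"
      by (intro DERIV_add DERIV_diff DERIV_cmult has_real_derivative_powr der that sq)
    moreover have "H B = (\<lambda>y. A*y^2 - K*y powr q + S B y)" by (rule ext) (simp add: H_def)
    ultimately show ?thesis unfolding H'_def fp_def by (simp add: algebra_simps)
  qed
  have fpC: "fp C > 0" using fp_C_pos[OF q A K C] by (simp add: fp_def)
  have "isCont fp C" unfolding fp_def by (rule isCont_fp[OF Cpos])
  then obtain \<delta> where \<delta>: "\<delta>>0" "\<forall>y. \<bar>y - C\<bar> < \<delta> \<longrightarrow> fp y > fp C/2"
    using near_pos[where g=fp and C=C and c="fp C/2"] fpC by auto
  define \<eta>0 where "\<eta>0 = min (\<delta>/2) (min ((C-m)/2) ((M-C)/2))"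
  have h1: "\<eta>0 \<le> \<delta>/2" "\<eta>0 \<le> (C-m)/2" "\<eta>0 \<le> (M-C)/2" unfolding \<eta>0_def by linarith+
  have h2: "\<eta>0 > 0" using \<delta> mM by (simp add: \<eta>0_def)
  have \<eta>0: "\<eta>0 > 0" "\<eta>0 < \<delta>" "m < C - \<eta>0" "C + \<eta>0 < M"
    using h1 h2 \<delta>(1) mM by (simp_all; linarith)+
  define a0 where "a0 = C - \<eta>0"
  define b0 where "b0 = C + \<eta>0"
  have ev3: "\<forall>\<^sub>F B in at_top. \<forall>y\<in>{a0..b0}. \<bar>dS B y\<bar> < fp C/2"
    by (rule unif_ev[OF udS]) (use \<eta>0 mM fpC in \<open>auto simp: a0_def\<close>)
  have G: "\<forall>\<^sub>F B in at_top. B > 0 \<and> (\<exists>x. C - \<eta> < x \<and> x < C + \<eta>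
            \<and> {y. m \<le> y \<and> y \<le> M \<and> H B y = 0} = {x}
            \<and> (\<forall>y. a0 < y \<and> y < x \<longrightarrow> H B y < 0) \<and> (\<forall>y. x < y \<and> y < b0 \<longrightarrow> H B y > 0))"
    if \<eta>: "0 < \<eta>" "\<eta> \<le> \<eta>0" for \<eta>
  proof -
    define d1 where "d1 = - (m powr q * (A * (C-\<eta>) powr (2-q) - K))"
    define d2 where "d2 = m powr q * (A * (C+\<eta>) powr (2-q) - K)"
    have "m \<le> C - \<eta>" using \<eta> \<eta>0 by simp
    hence d1: "d1 > 0" using f_neg(2)[OF q A K, of m m "C-\<eta>"] mM \<eta> C by (simp add: d1_def)
    have d2: "d2 > 0" using f_pos(2)[OF q A K, of m "C+\<eta>" "C+\<eta>"] mM \<eta> C by (simp add: d2_def)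
    have ev1: "\<forall>\<^sub>F B in at_top. \<forall>y\<in>{m..C-\<eta>}. \<bar>S B y\<bar> < d1"
      by (rule unif_ev[OF uS]) (use mM d1 in auto)
    have ev2: "\<forall>\<^sub>F B in at_top. \<forall>y\<in>{C+\<eta>..M}. \<bar>S B y\<bar> < d2"
      by (rule unif_ev[OF uS]) (use mM d2 Cpos \<eta> in auto)
    have ev0: "\<forall>\<^sub>F B in at_top. (B::real) > 0" by (rule eventually_gt_at_top)
    show ?thesis using ev0 ev1 ev2 ev3
    proof eventually_elim
      case (elim B)
      have "\<exists>x. C - \<eta> < x \<and> x < C + \<eta> \<and> {y. m \<le> y \<and> y \<le> M \<and> H B y = 0} = {x}
           \<and> (\<forall>y. a0 < y \<and> y < x \<longrightarrow> H B y < 0) \<and> (\<forall>y. x < y \<and> y < b0 \<longrightarrow> H B y > 0)"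
      proof (rule core_zero[of m a0 "C-\<eta>" "C+\<eta>" b0 M "H B" "H' B"])
        show "m < a0" "a0 \<le> C - \<eta>" "C - \<eta> < C + \<eta>" "C + \<eta> \<le> b0" "b0 < M"
          using \<eta>0 \<eta> by (auto simp: a0_def b0_def)
        show "\<forall>y. a0 \<le> y \<and> y \<le> b0 \<longrightarrow> (H B has_real_derivative H' B y) (at y) \<and> 0 < H' B y"
        proof (intro allI impI conjI)
          fix y assume y: "a0 \<le> y \<and> y \<le> b0"
          hence "y > 0" using \<eta>0 mM by (auto simp: a0_def)
          thus "(H B has_real_derivative H' B y) (at y)" using derH elim by blast
          have "\<bar>y - C\<bar> < \<delta>" using y \<eta>0 by (auto simp: a0_def b0_def)
          hence "fp y > fp C/2" using \<delta> by blast
          moreover have "\<bar>dS B y\<bar> < fp C/2" using elim y by auto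
          ultimately show "0 < H' B y" by (simp add: H'_def)
        qed
        show "\<forall>y. m \<le> y \<and> y \<le> C - \<eta> \<longrightarrow> H B y < 0"
        proof (intro allI impI)
          fix y assume y: "m \<le> y \<and> y \<le> C - \<eta>"
          have "A*y^2 - K*y powr q \<le> -d1" using f_neg(1)[OF q A K, of m y "C-\<eta>"] y mM \<eta> C
            by (simp add: d1_def)
          moreover have "\<bar>S B y\<bar> < d1" using elim y by auto
          ultimately show "H B y < 0" by (simp add: H_def)
        qed
        show "\<forall>y. C + \<eta> \<le> y \<and> y \<le> M \<longrightarrow> H B y > 0"
        proof (intro allI impI)
          fix y assume y: "C + \<eta> \<le> y \<and> y \<le> M"
          have "m \<le> y" using y mM \<eta> by simp
          hence "A*y^2 - K*y powr q \<ge> d2" using f_pos(1)[OF q A K, of m y "C+\<eta>"] y mM \<eta> C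
            by (simp add: d2_def)
          moreover have "\<bar>S B y\<bar> < d2" using elim y by auto
          ultimately show "H B y > 0" by (simp add: H_def)
        qed
      qed
      thus ?case using elim by blast
    qed
  qed
  have trans: "B powr (2/(2-q)) * D eps B = H B (eps / B powr (-1/(2-q)))" if "B > 0" "eps > 0" for B eps
    using ident[of B "eps / B powr (-1/(2-q))"] that by (simp add: H_def)
  have key: "lower_crossing D q m M B = x * B powr (-1/(2-q))"
       "(\<exists>eps. m * B powr (-1/(2-q)) \<le> eps \<and> eps \<le> M * B powr (-1/(2-q)) \<and> D eps B = 0)"
       "D (lower_crossing D q m M B) B = 0"
       "(\<forall>\<^sub>F eps in at_left (lower_crossing D q m M B). D eps B < 0)"
       "(\<forall>\<^sub>F eps in at_right (lower_crossing D q m M B). D eps B > 0)"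
    if B: "B > 0" and x: "a0 < x" "x < b0" and Z: "{y. m \<le> y \<and> y \<le> M \<and> H B y = 0} = {x}"
      and L: "\<forall>y. a0 < y \<and> y < x \<longrightarrow> H B y < 0" and R: "\<forall>y. x < y \<and> y < b0 \<longrightarrow> H B y > 0"
    for B x
  proof -
    define s where "s = B powr (-1/(2-q))"
    define P where "P = B powr (2/(2-q))"
    have s: "s > 0" and P: "P > 0" using B by (auto simp: s_def P_def)
    have sign: "D eps B = H B (eps/s) / P" if "eps > 0" for eps
      using trans[OF B that] P by (simp add: s_def P_def field_simps)
    have xpos: "x > 0" using x \<eta>0 mM by (simp add: a0_def)
    have xin: "m \<le> x" "x \<le> M" "H B x = 0" using Z by auto
    have set: "{eps. m * s \<le> eps \<and> eps \<le> M * s \<and> D eps B = 0} = {x * s}"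
    proof (intro set_eqI iffI)
      fix eps assume "eps \<in> {eps. m * s \<le> eps \<and> eps \<le> M * s \<and> D eps B = 0}"
      hence e: "m * s \<le> eps" "eps \<le> M * s" "D eps B = 0" by auto
      have epos: "eps > 0" using e(1) s mM by (smt (verit) mult_pos_pos)
      have "H B (eps/s) = 0" using sign[OF epos] e(3) P by simp
      moreover have "m \<le> eps/s" "eps/s \<le> M" using e s by (auto simp: field_simps)
      ultimately have "eps/s \<in> {y. m \<le> y \<and> y \<le> M \<and> H B y = 0}" by simp
      hence "eps/s = x" using Z by simp
      thus "eps \<in> {x * s}" using s by (simp add: field_simps)
    next
      fix eps assume "eps \<in> {x * s}"
      hence e: "eps = x * s" by simp
      have "D eps B = 0" using sign[of eps] e xpos s xin by simp
      thus "eps \<in> {eps. m * s \<le> eps \<and> eps \<le> M * s \<and> D eps B = 0}"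
        using e xin s by (auto intro: mult_right_mono)
    qed
    have lc: "lower_crossing D q m M B = x * s"
      unfolding lower_crossing_def s_def[symmetric] set by simp
    have ex: "\<exists>eps. m * s \<le> eps \<and> eps \<le> M * s \<and> D eps B = 0" using set by blast
    have D0: "D (x * s) B = 0" using set by blast
    have left: "\<forall>\<^sub>F eps in at_left (x * s). D eps B < 0"
    proof -
      have "a0 * s < x * s" using x s by simp
      hence "\<forall>\<^sub>F eps in at_left (x * s). eps \<in> {a0 * s<..<x * s}" by (rule eventually_at_left_real)
      thus ?thesis
      proof eventually_elim
        case (elim eps)
        have a0pos: "a0 > 0" using \<eta>0 mM by (simp add: a0_def)
        hence epos: "eps > 0" using elim s by (smt (verit) greaterThanLessThan_iff mult_pos_pos)
        have "a0 < eps/s" "eps/s < x" using elim s by (auto simp: field_simps)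
        hence "H B (eps/s) < 0" using L by blast
        thus ?case using sign[OF epos] P by (simp add: divide_neg_pos)
      qed
    qed
    have right: "\<forall>\<^sub>F eps in at_right (x * s). D eps B > 0"
    proof -
      have "x * s < b0 * s" using x s by simp
      hence "\<forall>\<^sub>F eps in at_right (x * s). eps \<in> {x * s<..<b0 * s}" by (rule eventually_at_right_real)
      thus ?thesis
      proof eventually_elim
        case (elim eps)
        have epos: "eps > 0" using elim s xpos by (smt (verit) greaterThanLessThan_iff mult_pos_pos)
        have "x < eps/s" "eps/s < b0" using elim s by (auto simp: field_simps)
        hence "H B (eps/s) > 0" using R by blast
        thus ?case using sign[OF epos] P by simp
      qed
    qed
    show "lower_crossing D q m M B = x * B powr (-1/(2-q))" using lc unfolding s_def .
    show "(\<exists>eps. m * B powr (-1/(2-q)) \<le> eps \<and> eps \<le> M * B powr (-1/(2-q)) \<and> D eps B = 0)"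
      using ex unfolding s_def .
    show "D (lower_crossing D q m M B) B = 0" using D0 lc by simp
    show "(\<forall>\<^sub>F eps in at_left (lower_crossing D q m M B). D eps B < 0)" using left lc by simp
    show "(\<forall>\<^sub>F eps in at_right (lower_crossing D q m M B). D eps B > 0)" using right lc by simp
  qed
  have part1: "\<forall>\<^sub>F B in at_top.
             (\<exists>eps. m * B powr (-1/(2-q)) \<le> eps \<and> eps \<le> M * B powr (-1/(2-q)) \<and> D eps B = 0)
             \<and> D (lower_crossing D q m M B) B = 0
             \<and> (\<forall>\<^sub>F eps in at_left (lower_crossing D q m M B). D eps B < 0)
             \<and> (\<forall>\<^sub>F eps in at_right (lower_crossing D q m M B). D eps B > 0)"
    using G[OF \<eta>0(1) order_refl]
  proof (elim eventually_mono)
    fix B assume "B > 0 \<and> (\<exists>x. C - \<eta>0 < x \<and> x < C + \<eta>0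
            \<and> {y. m \<le> y \<and> y \<le> M \<and> H B y = 0} = {x}
            \<and> (\<forall>y. a0 < y \<and> y < x \<longrightarrow> H B y < 0) \<and> (\<forall>y. x < y \<and> y < b0 \<longrightarrow> H B y > 0))"
    then obtain x where "B > 0" "C - \<eta>0 < x" "x < C + \<eta>0" "{y. m \<le> y \<and> y \<le> M \<and> H B y = 0} = {x}"
            "\<forall>y. a0 < y \<and> y < x \<longrightarrow> H B y < 0" "\<forall>y. x < y \<and> y < b0 \<longrightarrow> H B y > 0" by blast
    note xx = this
    have "a0 < x" "x < b0" using xx(2,3) by (auto simp: a0_def b0_def)
    note k = key[OF xx(1) this xx(4-6)]
    show "(\<exists>eps. m * B powr (-1/(2-q)) \<le> eps \<and> eps \<le> M * B powr (-1/(2-q)) \<and> D eps B = 0)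
             \<and> D (lower_crossing D q m M B) B = 0
             \<and> (\<forall>\<^sub>F eps in at_left (lower_crossing D q m M B). D eps B < 0)
             \<and> (\<forall>\<^sub>F eps in at_right (lower_crossing D q m M B). D eps B > 0)"
      by (rule conjI[OF k(2) conjI[OF k(3) conjI[OF k(4) k(5)]]])
  qed
  have part2: "((\<lambda>B. lower_crossing D q m M B / (C * B powr (-1/(2-q)))) \<longlongrightarrow> 1) at_top"
  proof (rule tendstoI)
    fix e :: real assume e: "e > 0"
    define \<eta> where "\<eta> = min \<eta>0 (e*C/2)"
    have \<eta>1: "\<eta> \<le> \<eta>0" "\<eta> \<le> e*C/2" unfolding \<eta>_def by simp_all
    have "e*C/2 > 0" using e Cpos by simp
    hence \<eta>2: "0 < \<eta>" unfolding \<eta>_def using \<eta>0(1) by simp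
    show "\<forall>\<^sub>F B in at_top. dist (lower_crossing D q m M B / (C * B powr (-1/(2-q)))) 1 < e"
      using G[OF \<eta>2 \<eta>1(1)]
    proof (rule eventually_mono)
      fix B assume "B > 0 \<and> (\<exists>x. C - \<eta> < x \<and> x < C + \<eta>
            \<and> {y. m \<le> y \<and> y \<le> M \<and> H B y = 0} = {x}
            \<and> (\<forall>y. a0 < y \<and> y < x \<longrightarrow> H B y < 0) \<and> (\<forall>y. x < y \<and> y < b0 \<longrightarrow> H B y > 0))"
      then obtain x where "B > 0" "C - \<eta> < x" "x < C + \<eta>" "{y. m \<le> y \<and> y \<le> M \<and> H B y = 0} = {x}"
            "\<forall>y. a0 < y \<and> y < x \<longrightarrow> H B y < 0" "\<forall>y. x < y \<and> y < b0 \<longrightarrow> H B y > 0" by blast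
      note xx = this
      have x1: "a0 < x" unfolding a0_def using xx(2) \<eta>1(1) by linarith
      have x2: "x < b0" unfolding b0_def using xx(3) \<eta>1(1) by linarith
      note k = key[OF xx(1) x1 x2 xx(4-6)]
      have sp: "B powr (-1/(2-q)) > 0" using xx(1) by simp
      have r: "lower_crossing D q m M B / (C * B powr (-1/(2-q))) = x / C"
        unfolding k(1) using sp by simp
      have r2: "x / C - 1 = (x - C) / C" using Cpos by (simp add: diff_divide_distrib)
      have r3: "\<bar>(x - C) / C\<bar> = \<bar>x - C\<bar> / C" using Cpos by simp
      have r4: "\<bar>x - C\<bar> < e*C/2" using xx(2,3) \<eta>1(2) by linarith
      have r5: "\<bar>x - C\<bar> / C < (e*C/2) / C" using r4 Cpos by (rule divide_strict_right_mono)
      have r6: "(e*C/2) / C = e/2" using Cpos by simp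
      show "dist (lower_crossing D q m M B / (C * B powr (-1/(2-q)))) 1 < e"
        unfolding dist_real_def r r2 r3 using r5 r6 e by linarith
    qed
  qed
  show ?thesis by (rule conjI[OF part1 part2])
qed

lemma K_pos_lemma:
  fixes nu q :: real and k :: nat and lam cf pr :: "nat \<Rightarrow> real"
  assumes nu: "nu > 0" and q: "q \<ge> 0" and k: "k \<ge> 1" and lam0: "lam 0 = 1"
    and lam_mono: "\<forall>i j. i < j \<and> j \<le> k \<longrightarrow> lam i < lam j"
    and cf_sum: "(\<Sum>j\<le>k. cf j) = 1"
    and cf_moments: "\<forall>m\<in>{1..k}. (\<Sum>j\<le>k. cf j * lam j ^ m) = 0"
    and pr_pos: "\<forall>j\<le>k. pr j > 0" and pr_sum: "(\<Sum>j\<le>k. pr j) = 1"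
  shows "K_qk nu q k cf lam pr > 0"
proof -
  have lam1: "lam j \<ge> 1" if "j \<le> k" for j
  proof (cases "j = 0")
    case True thus ?thesis using lam0 by simp
  next
    case False thus ?thesis using lam_mono that lam0 by force
  qed
  have m1: "(\<Sum>j\<le>k. cf j * lam j) = 0" using cf_moments k by force
  have ex: "\<exists>j\<le>k. cf j \<noteq> pr j"
  proof (rule ccontr)
    assume "\<not> ?thesis"
    hence eq: "\<forall>j\<le>k. cf j = pr j" by blast
    have "(\<Sum>j\<le>k. cf j * lam j) = (\<Sum>j\<le>k. pr j * lam j)" using eq by (intro sum.cong) auto
    also have "\<dots> > 0"
    proof (rule sum_pos2[of _ 0])
      show "0 < pr 0 * lam 0" using pr_pos lam0 by simp
      fix i assume "i \<in> {..k}"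
      hence "pr i > 0" "lam i \<ge> 1" using pr_pos lam1 by auto
      thus "0 \<le> pr i * lam i" by simp
    qed auto
    finally show False using m1 by simp
  qed
  have id: "(\<Sum>j\<le>k. (cf j - pr j)^2 / pr j) = (\<Sum>j\<le>k. (cf j)^2 / pr j) - 1"
  proof -
    have "(\<Sum>j\<le>k. (cf j - pr j)^2 / pr j) = (\<Sum>j\<le>k. (cf j)^2 / pr j - 2 * cf j + pr j)"
      using pr_pos by (intro sum.cong) (auto simp: field_simps power2_eq_square)
    also have "\<dots> = (\<Sum>j\<le>k. (cf j)^2 / pr j) - 2 * (\<Sum>j\<le>k. cf j) + (\<Sum>j\<le>k. pr j)"
      by (simp add: sum.distrib sum_subtractf sum_distrib_left)
    finally show ?thesis using cf_sum pr_sum by simp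
  qed
  obtain j where j: "j \<le> k" "cf j \<noteq> pr j" using ex by blast
  have "(\<Sum>j\<le>k. (cf j - pr j)^2 / pr j) > 0"
  proof (rule sum_pos2[of _ j])
    show "0 < (cf j - pr j)^2 / pr j" using j pr_pos by simp
    show "\<And>i. i \<in> {..k} \<Longrightarrow> 0 \<le> (cf i - pr i)^2 / pr i" using pr_pos by (simp add: less_imp_le)
  qed (use j in auto)
  hence s1: "(\<Sum>j\<le>k. (cf j)^2 / pr j) - 1 > 0" using id by simp
  have "(\<Sum>j\<le>k. (cf j)^2 / pr j) \<le> (\<Sum>j\<le>k. (cf j)^2 * lam j powr q / pr j)"
  proof (rule sum_mono)
    fix i assume "i \<in> {..k}"
    hence "lam i powr q \<ge> 1" "pr i > 0" using lam1 q ge_one_powr_ge_zero pr_pos by auto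
    thus "(cf i)^2 / pr i \<le> (cf i)^2 * lam i powr q / pr i"
      by (simp add: divide_right_mono mult_le_cancel_left1)
  qed
  hence "(\<Sum>j\<le>k. (cf j)^2 * lam j powr q / pr j) - 1 > 0" using s1 by linarith
  thus ?thesis unfolding K_qk_def using nu by simp
qed

lemma powr_tend0: "(p::real) > 0 \<Longrightarrow> ((\<lambda>e. e powr p) \<longlongrightarrow> 0) (at_right 0)"
  by (rule tendsto_zero_powrI) (auto intro: tendsto_ident_at eventually_at_right_less less_imp_le
      simp: eventually_at_right_less[THEN eventually_mono])

lemma powr_2_split: "(eps::real) > 0 \<Longrightarrow> eps powr (2 + d) = eps^2 * eps powr d"
  by (simp add: powr_add powr_numeral)

lemma rem_small:
  fixes R :: "real \<Rightarrow> real" and CR e0 db g B c :: real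
  assumes B: "B > 0" and e0: "e0 > 0" and db: "db > 0" and g: "g > 0" and c: "c > 0"
    and Rb: "\<And>eps. 0 < eps \<Longrightarrow> eps \<le> e0 \<Longrightarrow> \<bar>R eps\<bar> \<le> CR * (eps powr (2+db) + eps powr (2+g) / B)"
  shows "\<forall>\<^sub>F eps in at_right 0. \<bar>R eps\<bar> < c * eps^2"
proof -
  have "((\<lambda>e. CR * (e powr db + e powr g / B)) \<longlongrightarrow> CR * (0 + 0 / B)) (at_right 0)"
    using B by (intro tendsto_intros powr_tend0 db g) auto
  hence "((\<lambda>e. CR * (e powr db + e powr g / B)) \<longlongrightarrow> 0) (at_right 0)" by simp
  hence ev1: "\<forall>\<^sub>F e in at_right 0. CR * (e powr db + e powr g / B) < c"
    using c order_tendstoD(2) by blast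
  have ev2: "\<forall>\<^sub>F e in at_right (0::real). e \<in> {0<..<e0}" using e0 by (rule eventually_at_right_real)
  show ?thesis using ev1 ev2
  proof eventually_elim
    case (elim eps)
    hence ep: "0 < eps" "eps \<le> e0" by auto
    have "\<bar>R eps\<bar> \<le> CR * (eps powr (2+db) + eps powr (2+g) / B)" using Rb ep by blast
    also have "\<dots> = eps^2 * (CR * (eps powr db + eps powr g / B))"
      using powr_2_split[OF ep(1), of db] powr_2_split[OF ep(1), of g] by (simp add: algebra_simps)
    also have "\<dots> < eps^2 * c" using elim(1) ep by (intro mult_strict_left_mono) auto
    finally show ?case by (simp add: mult.commute)
  qed
qed

lemma q2_pos:
  fixes D R :: "real \<Rightarrow> real" and c CR e0 db dv B :: real
  assumes B: "B > 0" and e0: "e0 > 0" and db: "db > 0" and dv: "dv > 0" and c: "c > 0"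
    and Dq: "\<And>eps. eps > 0 \<Longrightarrow> D eps = c * eps^2 + R eps"
    and Rb: "\<And>eps. 0 < eps \<Longrightarrow> eps \<le> e0 \<Longrightarrow> \<bar>R eps\<bar> \<le> CR * (eps powr (2+db) + eps powr (2+dv) / B)"
  shows "\<forall>\<^sub>F eps in at_right 0. D eps > 0"
proof -
  have ev1: "\<forall>\<^sub>F eps in at_right 0. \<bar>R eps\<bar> < c * eps^2"
    by (rule rem_small[OF B e0 db dv c Rb])
  have ev2: "\<forall>\<^sub>F e in at_right (0::real). e \<in> {0<..<e0}" using e0 by (rule eventually_at_right_real)
  show ?thesis using ev1 ev2
  proof eventually_elim
    case (elim eps)
    thus ?case using Dq[of eps] by auto
  qed
qed

lemma q2_neg:
  fixes D R :: "real \<Rightarrow> real" and c CR e0 db dv B :: real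
  assumes B: "B > 0" and e0: "e0 > 0" and db: "db > 0" and dv: "dv > 0" and c: "c > 0"
    and Dq: "\<And>eps. eps > 0 \<Longrightarrow> D eps = - c * eps^2 + R eps"
    and Rb: "\<And>eps. 0 < eps \<Longrightarrow> eps \<le> e0 \<Longrightarrow> \<bar>R eps\<bar> \<le> CR * (eps powr (2+db) + eps powr (2+dv) / B)"
  shows "\<forall>\<^sub>F eps in at_right 0. D eps < 0"
proof -
  have ev1: "\<forall>\<^sub>F eps in at_right 0. \<bar>R eps\<bar> < c * eps^2"
    by (rule rem_small[OF B e0 db dv c Rb])
  have ev2: "\<forall>\<^sub>F e in at_right (0::real). e \<in> {0<..<e0}" using e0 by (rule eventually_at_right_real)
  show ?thesis using ev1 ev2
  proof eventually_elim
    case (elim eps)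
    thus ?case using Dq[of eps] by auto
  qed
qed

lemma qgt2_pos:
  fixes D R :: "real \<Rightarrow> real" and A K q CR e0 db dv B :: real
  assumes B: "B > 0" and e0: "e0 > 0" and db: "db > 0" and dv: "dv > 0" and A: "A > 0" and q: "q > 2"
    and Dq: "\<And>eps. D eps = A * eps^2 - K * eps powr q / B + R eps"
    and Rb: "\<And>eps. 0 < eps \<Longrightarrow> eps \<le> e0 \<Longrightarrow> \<bar>R eps\<bar> \<le> CR * (eps powr (2+db) + eps powr (q+dv) / B)"
  shows "\<forall>\<^sub>F eps in at_right 0. D eps > 0"
proof -
  have g: "q - 2 + dv > 0" using q dv by simp
  have Rb': "\<bar>R eps\<bar> \<le> CR * (eps powr (2+db) + eps powr (2+(q-2+dv)) / B)" if "0 < eps" "eps \<le> e0" for eps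
    using Rb[OF that] by simp
  have A2: "A/2 > 0" using A by simp
  have ev1: "\<forall>\<^sub>F eps in at_right 0. \<bar>R eps\<bar> < A/2 * eps^2"
    by (rule rem_small[OF B e0 db g A2 Rb'])
  have "((\<lambda>e. K * e powr (q-2) / B) \<longlongrightarrow> K * 0 / B) (at_right 0)"
    using q B by (intro tendsto_intros powr_tend0) auto
  hence "((\<lambda>e. K * e powr (q-2) / B) \<longlongrightarrow> 0) (at_right 0)" by simp
  hence "\<forall>\<^sub>F e in at_right 0. K * e powr (q-2) / B < A/2"
    using A2 by (rule order_tendstoD(2))
  moreover have ev2: "\<forall>\<^sub>F e in at_right (0::real). e \<in> {0<..<e0}" using e0 by (rule eventually_at_right_real)
  ultimately show ?thesis using ev1
  proof eventually_elim
    case (elim eps)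
    hence ep: "eps > 0" by simp
    have "eps powr q = eps^2 * eps powr (q-2)"
      using powr_2_split[OF ep, of "q-2"] by simp
    hence "K * eps powr q / B = eps^2 * (K * eps powr (q-2) / B)" by simp
    also have "\<dots> < eps^2 * (A/2)" using elim ep by (intro mult_strict_left_mono) auto
    finally have X: "K * eps powr q / B < A/2 * eps^2" by (simp add: mult.commute)
    show ?case using Dq[of eps] X elim(3) by (simp add: abs_less_iff) 
  qed
qed

theorem corollary8:
  fixes mu v :: "real \<Rightarrow> real" and mu0 :: real
    and k :: nat and lam cf pr a :: "nat \<Rightarrow> real"
    and alpha nu q delta_v delta_b :: real
    and dS :: "real \<Rightarrow> real \<Rightarrow> real"
  assumes bounded_obs: "\<exists>b. \<forall>eps\<ge>0. \<bar>mu eps\<bar> \<le> b \<and> \<bar>mu0\<bar> \<le> b"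
    and var_nonneg: "\<forall>eps\<ge>0. v eps \<ge> 0"
    and q_nonneg: "q \<ge> 0"
    and k_pos: "k \<ge> 1"
    and lam0: "lam 0 = 1"
    and lam_mono: "\<forall>i j. i < j \<and> j \<le> k \<longrightarrow> lam i < lam j"
    and cf_sum: "(\<Sum>j\<le>k. cf j) = 1"
    and cf_moments: "\<forall>m\<in>{1..k}. (\<Sum>j\<le>k. cf j * lam j ^ m) = 0"
    and pr_pos: "\<forall>j\<le>k. pr j > 0"
    and pr_sum: "(\<Sum>j\<le>k. pr j) = 1"
    \<comment> \<open>(A1(k))\<close>
    and A1: "\<exists>Ca e1. e1 > 0 \<and> (\<forall>j\<le>k. \<forall>eps. 0 < eps \<and> eps \<le> e1 \<longrightarrow>
               \<bar>mu (lam j * eps) - mu0 - (\<Sum>m=1..k. a m * lam j ^ m * eps ^ m)\<bar> \<le> Ca * eps ^ (k+1))"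
    and a1: "a 1 = alpha" and alpha_nz: "alpha \<noteq> 0"
    \<comment> \<open>(A4)\<close>
    and A4: "\<exists>Cv e2. e2 > 0 \<and> (\<forall>j\<le>k. \<forall>eps. 0 < eps \<and> eps \<le> e2 \<longrightarrow>
               \<bar>v (lam j * eps) - nu * (lam j * eps) powr q\<bar> \<le> Cv * (lam j * eps) powr (q + delta_v))"
    and nu_pos: "nu > 0" and dv_pos: "delta_v > 0"
    \<comment> \<open>(A5): size of the remainder\<close>
    and db_pos: "delta_b > 0"
    and A5: "\<exists>CR e0. e0 > 0 \<and> (\<forall>B>0. \<forall>eps. 0 < eps \<and> eps \<le> e0 \<longrightarrow>
               \<bar>zne_R mu mu0 v k cf lam pr alpha nu q eps B\<bar>
                 \<le> CR * (eps powr (2 + delta_b) + eps powr (q + delta_v) / B))"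
    \<comment> \<open>(A5), case q < 2: rescaled remainder differentiable, it and its x-derivative tend to 0
        uniformly on compact subsets of (0,inf)\<close>
    and A5_diff: "q < 2 \<Longrightarrow> \<forall>B>0. \<forall>x>0.
               ((\<lambda>y. B powr (2/(2-q)) * zne_R mu mu0 v k cf lam pr alpha nu q (y * B powr (-1/(2-q))) B)
                  has_real_derivative dS B x) (at x)"
    and A5_unif: "q < 2 \<Longrightarrow> \<forall>S. compact S \<and> S \<subseteq> {0<..} \<longrightarrow>
               uniform_limit S
                 (\<lambda>B x. B powr (2/(2-q)) * zne_R mu mu0 v k cf lam pr alpha nu q (x * B powr (-1/(2-q))) B)
                 (\<lambda>x. 0) at_top"
    and A5_unif_deriv: "q < 2 \<Longrightarrow> \<forall>S. compact S \<and> S \<subseteq> {0<..} \<longrightarrow>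
               uniform_limit S dS (\<lambda>x. 0) at_top"
  shows "K_qk nu q k cf lam pr > 0
    \<and> (q < 2 \<longrightarrow>
         (\<forall>m M. 0 < m \<and> m < (K_qk nu q k cf lam pr / alpha^2) powr (1/(2-q))
                 \<and> (K_qk nu q k cf lam pr / alpha^2) powr (1/(2-q)) < M \<longrightarrow>
            (\<forall>\<^sub>F B in at_top.
               (\<exists>eps. m * B powr (-1/(2-q)) \<le> eps \<and> eps \<le> M * B powr (-1/(2-q))
                      \<and> delta_mse mu mu0 v k cf lam pr eps B = 0)
             \<and> delta_mse mu mu0 v k cf lam pr
                 (lower_crossing (delta_mse mu mu0 v k cf lam pr) q m M B) B = 0
             \<and> (\<forall>\<^sub>F eps in at_left (lower_crossing (delta_mse mu mu0 v k cf lam pr) q m M B).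
                  delta_mse mu mu0 v k cf lam pr eps B < 0)
             \<and> (\<forall>\<^sub>F eps in at_right (lower_crossing (delta_mse mu mu0 v k cf lam pr) q m M B).
                  delta_mse mu mu0 v k cf lam pr eps B > 0))
          \<and> ((\<lambda>B. lower_crossing (delta_mse mu mu0 v k cf lam pr) q m M B
                   / ((K_qk nu q k cf lam pr / alpha^2) powr (1/(2-q)) * B powr (-1/(2-q))))
               \<longlongrightarrow> 1) at_top))
    \<and> (q = 2 \<longrightarrow> (\<forall>B>0.
          (B > K_qk nu q k cf lam pr / alpha^2 \<longrightarrow>
             (\<forall>\<^sub>F eps in at_right 0. delta_mse mu mu0 v k cf lam pr eps B > 0))
        \<and> (B < K_qk nu q k cf lam pr / alpha^2 \<longrightarrow>
             (\<forall>\<^sub>F eps in at_right 0. delta_mse mu mu0 v k cf lam pr eps B < 0))))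
    \<and> (q > 2 \<longrightarrow> (\<forall>\<^sub>F B in at_top.
          \<forall>\<^sub>F eps in at_right 0. delta_mse mu mu0 v k cf lam pr eps B > 0))"
proof -
  let ?D = "delta_mse mu mu0 v k cf lam pr"
  let ?K = "K_qk nu q k cf lam pr"
  let ?R = "zne_R mu mu0 v k cf lam pr alpha nu q"
  have Kpos: "?K > 0"
    by (rule K_pos_lemma[OF nu_pos q_nonneg k_pos lam0 lam_mono cf_sum cf_moments pr_pos pr_sum])
  have A: "alpha^2 > 0" using alpha_nz by simp
  have Dform: "?D eps B = alpha^2 * eps^2 - ?K * eps powr q / B + ?R eps B" for eps B
    by (simp add: zne_R_def)
  obtain CR e0 where e0: "e0 > 0" and Rb: "\<forall>B>0. \<forall>eps. 0 < eps \<and> eps \<le> e0 \<longrightarrow>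
      \<bar>?R eps B\<bar> \<le> CR * (eps powr (2 + delta_b) + eps powr (q + delta_v) / B)"
    using A5 by blast
  have P1: "q < 2 \<longrightarrow>
         (\<forall>m M. 0 < m \<and> m < (?K / alpha^2) powr (1/(2-q))
                 \<and> (?K / alpha^2) powr (1/(2-q)) < M \<longrightarrow>
            (\<forall>\<^sub>F B in at_top.
               (\<exists>eps. m * B powr (-1/(2-q)) \<le> eps \<and> eps \<le> M * B powr (-1/(2-q))
                      \<and> ?D eps B = 0)
             \<and> ?D (lower_crossing ?D q m M B) B = 0
             \<and> (\<forall>\<^sub>F eps in at_left (lower_crossing ?D q m M B). ?D eps B < 0)
             \<and> (\<forall>\<^sub>F eps in at_right (lower_crossing ?D q m M B). ?D eps B > 0))
          \<and> ((\<lambda>B. lower_crossing ?D q m M B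
                   / ((?K / alpha^2) powr (1/(2-q)) * B powr (-1/(2-q))))
               \<longlongrightarrow> 1) at_top)"
  proof (intro impI allI)
    fix m M assume q2: "q < 2" and mM: "0 < m \<and> m < (?K / alpha^2) powr (1/(2-q))
                 \<and> (?K / alpha^2) powr (1/(2-q)) < M"
    have qne: "2 - q \<noteq> 0" using q2 by simp
    have ident: "B powr (2/(2-q)) * ?D (y * B powr (-1/(2-q))) B
        = alpha^2 * y^2 - ?K * y powr q + B powr (2/(2-q)) * ?R (y * B powr (-1/(2-q))) B"
      if B: "B > 0" and y: "y > 0" for B y
    proof -
      define s where "s = B powr (-1/(2-q))"
      define P where "P = B powr (2/(2-q))"
      have s0: "s > 0" using B by (simp add: s_def)
      have e1: "2/(2-q) + (-1/(2-q) + -1/(2-q)) = 0" using qne by (simp add: field_simps)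
      have "P * s^2 = B powr (2/(2-q) + (-1/(2-q) + -1/(2-q)))"
        unfolding P_def s_def power2_eq_square by (simp only: powr_add)
      hence ps2: "P * s^2 = 1" using e1 B by simp
      have e2a: "-1/(2-q) * q = -q/(2-q)" by simp
      have e2b: "2/(2-q) + -q/(2-q) = (2 + -q)/(2-q)" by (rule add_divide_distrib[symmetric])
      have e2: "2/(2-q) + -1/(2-q) * q = 1" unfolding e2a e2b using qne by simp
      have "P * s powr q = B powr (2/(2-q) + -1/(2-q) * q)"
        unfolding P_def s_def by (simp only: powr_add powr_powr)
      hence psq: "P * s powr q = B" using e2 B by simp
      have ys: "(y * s) powr q = y powr q * s powr q" using y s0 by (simp add: powr_mult)
      have "P * ?D (y * s) B = P * (alpha^2 * (y * s)^2 - ?K * (y * s) powr q / B + ?R (y * s) B)"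
        by (simp add: Dform)
      also have "\<dots> = alpha^2 * y^2 * (P * s^2) - ?K * y powr q * (P * s powr q) / B + P * ?R (y * s) B"
        using y s0 by (simp add: ys powr_mult power_mult_distrib algebra_simps)
      also have "\<dots> = alpha^2 * y^2 - ?K * y powr q + P * ?R (y * s) B"
        using ps2 psq B by simp
      finally show ?thesis by (simp add: P_def s_def)
    qed
    have der: "((\<lambda>y. B powr (2/(2-q)) * ?R (y * B powr (-1/(2-q))) B) has_real_derivative dS B y) (at y)"
      if "B > 0" "y > 0" for B y
      using A5_diff[OF q2] that by blast
    have uS: "uniform_limit T (\<lambda>B y. B powr (2/(2-q)) * ?R (y * B powr (-1/(2-q))) B) (\<lambda>x. 0) at_top"
      if "compact T" "T \<subseteq> {0<..}" for T
      using A5_unif[OF q2] that by blast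
    have udS: "uniform_limit T dS (\<lambda>x. 0) at_top"
      if "compact T" "T \<subseteq> {0<..}" for T
      using A5_unif_deriv[OF q2] that by blast
    show "(\<forall>\<^sub>F B in at_top.
               (\<exists>eps. m * B powr (-1/(2-q)) \<le> eps \<and> eps \<le> M * B powr (-1/(2-q))
                      \<and> ?D eps B = 0)
             \<and> ?D (lower_crossing ?D q m M B) B = 0
             \<and> (\<forall>\<^sub>F eps in at_left (lower_crossing ?D q m M B). ?D eps B < 0)
             \<and> (\<forall>\<^sub>F eps in at_right (lower_crossing ?D q m M B). ?D eps B > 0))
          \<and> ((\<lambda>B. lower_crossing ?D q m M B
                   / ((?K / alpha^2) powr (1/(2-q)) * B powr (-1/(2-q))))
               \<longlongrightarrow> 1) at_top"
      by (rule qlt2_main[OF q_nonneg q2 A Kpos refl ident der uS udS])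
         (use mM in auto)
  qed
  have P2: "q = 2 \<longrightarrow> (\<forall>B>0.
          (B > ?K / alpha^2 \<longrightarrow>
             (\<forall>\<^sub>F eps in at_right 0. ?D eps B > 0))
        \<and> (B < ?K / alpha^2 \<longrightarrow>
             (\<forall>\<^sub>F eps in at_right 0. ?D eps B < 0)))"
  proof (intro impI allI conjI)
    fix B :: real assume q2: "q = 2" and B: "B > 0"
    have Rb2: "\<bar>?R eps B\<bar> \<le> CR * (eps powr (2 + delta_b) + eps powr (2 + delta_v) / B)"
      if "0 < eps" "eps \<le> e0" for eps
      using Rb B that q2 by auto
    have Dq: "?D eps B = (alpha^2 - ?K / B) * eps^2 + ?R eps B" if "eps > 0" for eps
      using Dform[of eps B] that q2 by (simp add: powr_numeral algebra_simps)
    {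
      assume "B > ?K / alpha^2"
      hence "alpha^2 * B > ?K" using A by (simp add: field_simps)
      hence c: "alpha^2 - ?K / B > 0" using B by (simp add: field_simps)
      show "\<forall>\<^sub>F eps in at_right 0. ?D eps B > 0"
        by (rule q2_pos[OF B e0 db_pos dv_pos c Dq Rb2])
    }
    {
      assume "B < ?K / alpha^2"
      hence "alpha^2 * B < ?K" using A by (simp add: field_simps)
      hence c: "?K / B - alpha^2 > 0" using B by (simp add: field_simps)
      have Dq': "?D eps B = - (?K / B - alpha^2) * eps^2 + ?R eps B" if "eps > 0" for eps
        using Dq[OF that] by simp
      show "\<forall>\<^sub>F eps in at_right 0. ?D eps B < 0"
        by (rule q2_neg[OF B e0 db_pos dv_pos c Dq' Rb2])
    }
  qed
  have P3: "q > 2 \<longrightarrow> (\<forall>\<^sub>F B in at_top.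
          \<forall>\<^sub>F eps in at_right 0. ?D eps B > 0)"
  proof
    assume q2: "q > 2"
    have "\<forall>\<^sub>F B in at_top. (B::real) > 0" by (rule eventually_gt_at_top)
    thus "\<forall>\<^sub>F B in at_top. \<forall>\<^sub>F eps in at_right 0. ?D eps B > 0"
    proof (rule eventually_mono)
      fix B :: real assume B: "B > 0"
      have Rb3: "\<bar>?R eps B\<bar> \<le> CR * (eps powr (2 + delta_b) + eps powr (q + delta_v) / B)"
        if "0 < eps" "eps \<le> e0" for eps
        using Rb B that by auto
      show "\<forall>\<^sub>F eps in at_right 0. ?D eps B > 0"
        by (rule qgt2_pos[OF B e0 db_pos dv_pos A q2 Dform Rb3])
    qed
  qed
  show ?thesis using Kpos P1 P2 P3 by blast
qed

end
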